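(* For every integer $n\ge1$, the following identity of rational functions holds: \[ R_n(z)=(-1)^n\frac{(n!)^2}{((2n)!)^2}\cdot\frac{z^{2n}}{(z-1)^{2n+2}}\cdot\frac{1}{Q_n(w)\,Q_n(-w)},\qquad w=\frac{z}{z-1}. \]
   Context: For $n\ge1$ let $y_n(z)=\sum_{k=0}^{n}\frac{(n+k)!}{(n-k)!\,k!}\left(\frac{z}{2}\right)^k$ be the $n$-th Bessel polynomial and let $\alpha_{n1},\dots,\alpha_{nn}$ be its zeros (they are simple). Put $a_{nk}=1-\alpha_{nk}/2$ and $b_{nk}=1+\alpha_{nk}/2$ for $k=1,\dots,n$. Define \[ R_n(z)=\frac{1}{(z-1)^2}-\sum_{k=1}^n\frac{a_{nk}}{1-a_{nk}z}+\sum_{k=1}^n\frac{b_{nk}}{1-b_{nk}z}, \] and the polynomial $Q_n(z)=\frac{n!}{(2n)!}\sum_{k=0}^{n}\frac{(2n-k)!}{(n-k)!}\frac{z^k}{k!}$ (so $Q_n(0)=1$). *)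

theory Defs
  imports "HOL-Computational_Algebra.Polynomial" Complex_Main
begin

definition bessel_poly :: "nat \<Rightarrow> complex poly" where
  "bessel_poly n = (\<Sum>k\<le>n. monom (of_nat (fact (n + k)) /
       (of_nat (fact (n - k)) * of_nat (fact k) * 2 ^ k)) k)"

text \<open>The (simple) zeros of y_n.\<close>
definition bessel_zeros :: "nat \<Rightarrow> complex set" where
  "bessel_zeros n = {\<alpha>. poly (bessel_poly n) \<alpha> = 0}"

definition R_fun :: "nat \<Rightarrow> complex \<Rightarrow> complex" where
  "R_fun n z = 1 / (z - 1)^2
     - (\<Sum>\<alpha>\<in>bessel_zeros n. (1 - \<alpha>/2) / (1 - (1 - \<alpha>/2) * z))
     + (\<Sum>\<alpha>\<in>bessel_zeros n. (1 + \<alpha>/2) / (1 - (1 + \<alpha>/2) * z))"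

definition Q_fun :: "nat \<Rightarrow> complex \<Rightarrow> complex" where
  "Q_fun n z = of_nat (fact n) / of_nat (fact (2*n)) *
     (\<Sum>k\<le>n. of_nat (fact (2*n - k)) / of_nat (fact (n - k)) * z ^ k / of_nat (fact k))"

end

theory Submission imports Defs "HOL-Computational_Algebra.Fundamental_Theorem_Algebra" begin

definition bc :: "nat \<Rightarrow> nat \<Rightarrow> complex" where
  "bc n j = of_nat (fact (n + j)) / (of_nat (fact (n - j)) * of_nat (fact j) * 2 ^ j)"

lemma coeff_bessel: "coeff (bessel_poly n) j = (if j \<le> n then bc n j else 0)"
  unfolding bessel_poly_def bc_def by (simp add: coeff_sum coeff_monom)

lemma bc_rec:
  assumes "j < n"
  shows "2 * of_nat (Suc j) * bc n (Suc j) = of_nat (n + j + 1) * of_nat (n - j) * bc n j"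
proof -
  define m where "m = n - Suc j"
  have n: "n = j + Suc m" using assms unfolding m_def by simp
  have e1: "n + Suc j = Suc (Suc (j + j + m))" "n + j = Suc (j + j + m)" "n - Suc j = m" "n - j = Suc m"
    "n + j + 1 = Suc (Suc (j + j + m))" using n by auto
  define k where "k = j + j + m"
  have f1: "(fact (Suc (Suc k)) :: complex) = of_nat (Suc (Suc k)) * fact (Suc k)"
    by (rule fact_Suc)
  have f2: "(fact (Suc j) :: complex) = of_nat (Suc j) * fact j" by (rule fact_Suc)
  have f3: "(fact (Suc m) :: complex) = of_nat (Suc m) * fact m" by (rule fact_Suc)
  have nz: "(fact m :: complex) \<noteq> 0" "(fact j :: complex) \<noteq> 0" "of_nat (Suc j) \<noteq> (0::complex)"
    "of_nat (Suc m) \<noteq> (0::complex)" by (simp, simp, rule of_nat_neq_0, rule of_nat_neq_0)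
  have "2 * of_nat (Suc j) * bc n (Suc j) = 2 * of_nat (Suc j) * (fact (Suc (Suc k)) / (fact m * fact (Suc j) * 2 ^ Suc j))"
    unfolding bc_def e1 k_def[symmetric] of_nat_fact ..
  also have "\<dots> = fact (Suc (Suc k)) / (fact m * fact j * 2 ^ j)"
    unfolding f2 using nz by (simp add: field_simps del: fact_Suc of_nat_Suc)
  also have "\<dots> = of_nat (Suc (Suc k)) * of_nat (Suc m) * (fact (Suc k) / (fact (Suc m) * fact j * 2 ^ j))"
    unfolding f1 f3 using nz by (simp add: field_simps del: fact_Suc of_nat_Suc)
  also have "\<dots> = of_nat (n + j + 1) * of_nat (n - j) * bc n j"
    unfolding bc_def e1(2,4) k_def[symmetric] of_nat_fact Suc_eq_plus1[symmetric] ..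
  finally show ?thesis .
qed

lemma bc0: "bc n 0 = 1" by (simp add: bc_def)

lemma coeff_ode:
  fixes p :: "complex poly"
  shows "coeff ([:0,0,1:] * pderiv (pderiv p) + [:a, b:] * pderiv p - smult N p) j =
    of_nat j * (of_nat j - 1) * coeff p j + a * of_nat (Suc j) * coeff p (Suc j)
      + b * of_nat j * coeff p j - N * coeff p j"
proof (cases j)
  case 0 then show ?thesis by (simp add: coeff_pderiv)
next
  case (Suc i) then show ?thesis
    by (cases i) (simp_all add: coeff_pderiv algebra_simps)
qed

definition ode :: "complex \<Rightarrow> nat \<Rightarrow> complex poly \<Rightarrow> complex poly" where
  "ode s n p = [:0,0,1:] * pderiv (pderiv p) + [:2 * s, 2:] * pderiv p - smult (of_nat (n * (n+1))) p"

lemma bessel_ode: "ode 1 n (bessel_poly n) = 0"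
proof (rule poly_eqI)
  fix j
  show "coeff (ode 1 n (bessel_poly n)) j = coeff 0 j"
  proof (cases "j < n")
    case True
    have r: "2 * of_nat (Suc j) * bc n (Suc j) = of_nat (n + j + 1) * (of_nat n - of_nat j) * bc n j"
      using bc_rec[OF True] True by (simp add: of_nat_diff)
    have "coeff (ode 1 n (bessel_poly n)) j =
      of_nat j * (of_nat j - 1) * bc n j + 2 * of_nat (Suc j) * bc n (Suc j)
      + 2 * of_nat j * bc n j - of_nat (n * (n+1)) * bc n j"
      unfolding ode_def coeff_ode using True by (simp add: coeff_bessel)
    also have "\<dots> = 0" unfolding r by (simp add: algebra_simps)
    finally show ?thesis by simp
  next
    case False
    show ?thesis
    proof (cases "j = n")
      case True
      show ?thesis unfolding ode_def coeff_ode using True by (simp add: coeff_bessel algebra_simps)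
    next
      case False
      then show ?thesis unfolding ode_def coeff_ode using \<open>\<not> j < n\<close> by (simp add: coeff_bessel)
    qed
  qed
qed

definition X :: "complex poly" where "X = [:0, 1:]"

lemma pderiv_X [simp]: "pderiv X = 1" by (simp add: X_def pderiv_pCons)
lemma pcompose_X: "pcompose X [:0,-1:] = - X" by (simp add: X_def pcompose_pCons)

lemma XX: "[:0,0,1:] = X * X" by (simp add: X_def mult_pCons_left)

lemma lin_X: "[:2*s, 2:] = [:2*s:] + 2 * X"
  by (simp add: X_def poly_eq_iff coeff_pCons numeral_poly split: nat.split)

lemma ode_X: "ode s n p = X * X * pderiv (pderiv p) + ([:2*s:] + 2 * X) * pderiv p
   - smult (of_nat (n * (n+1))) p"
  unfolding ode_def XX lin_X ..

lemma ode_reflect: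
  "pcompose (ode 1 n p) [:0,-1:] = ode (-1) n (pcompose p [:0,-1:])"
proof -
  let ?m = "[:0,-1:] :: complex poly"
  have d1: "pcompose (pderiv p) ?m = - pderiv (pcompose p ?m)"
    by (simp add: pderiv_pcompose pderiv_pCons)
  have d2: "pcompose (pderiv (pderiv p)) ?m = pderiv (pderiv (pcompose p ?m))"
    by (simp add: pderiv_pcompose pderiv_pCons pderiv_minus)
  have m: "pcompose X ?m = - X" by (rule pcompose_X)
  show ?thesis unfolding ode_X
    by (simp add: pcompose_diff pcompose_add pcompose_mult pcompose_smult d1 d2 m numeral_poly
       algebra_simps)
qed

definition Gp :: "complex poly \<Rightarrow> complex poly \<Rightarrow> complex poly" where
  "Gp y v = X * X * (pderiv y * v - y * pderiv v) + 2 * (y * v)"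

lemma pderiv_Gp: "pderiv (Gp y v) = v * ode 1 n y - y * ode (-1) n v"
  unfolding Gp_def ode_X
  by (simp add: pderiv_mult pderiv_add pderiv_diff pderiv_smult pderiv_pCons numeral_poly algebra_simps smult_add_right)

lemma degree_lin_prod: "finite S \<Longrightarrow> degree (\<Prod>s\<in>S. [:-s, 1:] :: complex poly) = card S"
  by (subst degree_prod_eq_sum_degree) auto

lemma lagrange:
  fixes S :: "complex set" and q :: "complex poly"
  assumes fin: "finite S" and deg: "degree q < card S"
  shows "q = (\<Sum>r\<in>S. smult (poly q r / (\<Prod>s\<in>S-{r}. r - s)) (\<Prod>s\<in>S-{r}. [:-s,1:]))"
    (is "q = ?R")
proof (rule ccontr)
  assume ne: "q \<noteq> ?R"
  define f where "f = ?R - q"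
  have f0: "f \<noteq> 0" using not_sym[OF ne] unfolding f_def by simp
  have "S \<noteq> {}" using deg by auto
  have dR: "degree ?R \<le> card S - 1"
  proof (rule degree_sum_le[OF fin])
    fix r assume "r \<in> S"
    have "degree (smult (poly q r / (\<Prod>s\<in>S-{r}. r - s)) (\<Prod>s\<in>S-{r}. [:-s,1:])) \<le>
      degree (\<Prod>s\<in>S-{r}. [:-s,1:] :: complex poly)" by (rule degree_smult_le)
    also have "\<dots> = card (S - {r})" using fin by (intro degree_lin_prod) auto
    also have "\<dots> = card S - 1" using \<open>r \<in> S\<close> fin by simp
    finally show "degree (smult (poly q r / (\<Prod>s\<in>S-{r}. r - s)) (\<Prod>s\<in>S-{r}. [:-s,1:])) \<le> card S - 1" .
  qed
  have df: "degree f < card S" unfolding f_def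
    using dR deg \<open>S \<noteq> {}\<close> fin
    by (intro degree_diff_less) (auto simp: card_gt_0_iff)
  have roots: "S \<subseteq> {x. poly f x = 0}"
  proof
    fix x assume x: "x \<in> S"
    have "poly ?R x = (\<Sum>r\<in>S. poly q r / (\<Prod>s\<in>S-{r}. r - s) * (\<Prod>s\<in>S-{r}. x - s))"
      by (simp add: poly_sum poly_prod)
    also have "\<dots> = poly q x / (\<Prod>s\<in>S-{x}. x - s) * (\<Prod>s\<in>S-{x}. x - s) +
       (\<Sum>r\<in>S-{x}. poly q r / (\<Prod>s\<in>S-{r}. r - s) * (\<Prod>s\<in>S-{r}. x - s))"
      using fin x by (subst sum.remove) auto
    also have "(\<Sum>r\<in>S-{x}. poly q r / (\<Prod>s\<in>S-{r}. r - s) * (\<Prod>s\<in>S-{r}. x - s)) = 0"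
    proof (rule sum.neutral, rule ballI)
      fix r assume "r \<in> S - {x}"
      then have "(\<Prod>s\<in>S-{r}. x - s) = 0" using fin x by (intro prod_zero) auto
      then show "poly q r / (\<Prod>s\<in>S-{r}. r - s) * (\<Prod>s\<in>S-{r}. x - s) = 0" by simp
    qed
    also have "(\<Prod>s\<in>S-{x}. x - s) \<noteq> 0" using fin by (subst prod_zero_iff) auto
    then have "poly q x / (\<Prod>s\<in>S-{x}. x - s) * (\<Prod>s\<in>S-{x}. x - s) = poly q x" by simp
    finally show "x \<in> {x. poly f x = 0}" unfolding f_def by simp
  qed
  have "card S \<le> card {x. poly f x = 0}" using roots poly_roots_finite[OF f0] by (rule card_mono[rotated])
  also have "\<dots> \<le> degree f" by (rule card_poly_roots_bound[OF f0])
  finally show False using df by simp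
qed

lemma poly_X [simp]: "poly X x = x" by (simp add: X_def)

lemma pderiv_refl: "pderiv (pcompose (p::complex poly) [:0,-1:]) = - pcompose (pderiv p) [:0,-1:]"
proof -
  show ?thesis by (simp add: pderiv_pcompose pderiv_pCons)
qed

lemma bessel_G:
  fixes x :: complex and n :: nat
  defines "y \<equiv> bessel_poly n"
  shows "x^2 * (poly (pderiv y) x * poly y (-x) + poly y x * poly (pderiv y) (-x))
      + 2 * poly y x * poly y (-x) = 2"
proof -
  define v where "v = pcompose y [:0,-1:]"
  have "ode (-1) n v = 0" unfolding v_def y_def
    by (simp add: ode_reflect[symmetric] bessel_ode)
  moreover have "pderiv (Gp y v) = v * ode 1 n y - y * ode (-1) n v" by (rule pderiv_Gp)
  ultimately have "pderiv (Gp y v) = 0" unfolding y_def by (simp add: bessel_ode)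
  then obtain h where h: "Gp y v = [:h:]" using pderiv_iszero by blast
  have pv: "\<And>x. poly v x = poly y (-x)" "\<And>x. poly (pderiv v) x = - poly (pderiv y) (-x)"
    unfolding v_def pderiv_refl by (simp_all add: poly_pcompose)
  have y0: "poly y 0 = 1" unfolding y_def by (simp add: poly_0_coeff_0 coeff_bessel bc0)
  have ev: "\<And>x. poly (Gp y v) x = x^2 * (poly (pderiv y) x * poly y (-x) + poly y x * poly (pderiv y) (-x))
      + 2 * poly y x * poly y (-x)"
    unfolding Gp_def by (simp add: pv power2_eq_square algebra_simps)
  have "h = 2" using ev[of 0] y0 unfolding h by simp
  then show ?thesis using ev[of x] unfolding h by simp
qed

lemma bessel_root:
  assumes "poly (bessel_poly n) a = 0"
  shows "a^2 * poly (pderiv (bessel_poly n)) a * poly (bessel_poly n) (-a) = 2"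
  using bessel_G[of a n] assms by (simp add: algebra_simps)

lemma bessel_nz: "bessel_poly n \<noteq> 0"
proof
  assume "bessel_poly n = 0"
  then have "coeff (bessel_poly n) 0 = 0" by simp
  then show False by (simp add: coeff_bessel bc0)
qed

lemma bessel_rsf: "rsquarefree (bessel_poly n)"
  unfolding rsquarefree_roots
proof (intro allI notI)
  fix a assume "poly (bessel_poly n) a = 0 \<and> poly (pderiv (bessel_poly n)) a = 0"
  then show False using bessel_root[of n a] by simp
qed

lemma bessel_decomp:
  "bessel_poly n = smult (lead_coeff (bessel_poly n)) (\<Prod>z\<in>bessel_zeros n. [:-z, 1:])"
  using complex_poly_decompose_rsquarefree[OF bessel_rsf[of n]] unfolding bessel_zeros_def by simp

lemma bessel_zeros_finite: "finite (bessel_zeros n)"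
  unfolding bessel_zeros_def by (rule poly_roots_finite[OF bessel_nz])

lemma degree_bessel: "degree (bessel_poly n) = n"
proof (rule antisym)
  show "degree (bessel_poly n) \<le> n" by (rule degree_le) (simp add: coeff_bessel)
  show "n \<le> degree (bessel_poly n)"
    by (rule le_degree) (simp add: coeff_bessel bc_def)
qed

lemma card_bessel_zeros: "card (bessel_zeros n) = n"
proof -
  have "degree (bessel_poly n) = degree (\<Prod>z\<in>bessel_zeros n. [:-z, 1:])"
    by (subst bessel_decomp) (simp add: bessel_nz)
  then show ?thesis using degree_lin_prod[OF bessel_zeros_finite] degree_bessel by simp
qed

lemma prod_lin_coeffs:
  fixes S :: "complex set"
  assumes "finite S"
  shows "coeff (\<Prod>s\<in>S. [:-s, 1:]) (card S) = 1 \<and>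
         (S \<noteq> {} \<longrightarrow> coeff (\<Prod>s\<in>S. [:-s, 1:]) (card S - 1) = - sum (\<lambda>s. s) S)"
  using assms
proof (induction S rule: finite_induct)
  case empty then show ?case by simp
next
  case (insert a F)
  let ?P = "\<Prod>s\<in>F. [:-s, 1:] :: complex poly"
  have dP: "degree ?P = card F" by (rule degree_lin_prod[OF insert(1)])
  have eq: "(\<Prod>s\<in>insert a F. [:-s, 1:]) = smult (-a) ?P + pCons 0 ?P"
    using insert by (simp add: mult_pCons_left)
  have c1: "coeff ?P (Suc (card F)) = 0" using dP by (simp add: coeff_eq_0)
  show ?case
  proof (cases "F = {}")
    case True then show ?thesis by simp
  next
    case False
    then have "card F \<noteq> 0" using insert(1) by simp
    then obtain k where k: "card F = Suc k" using not0_implies_Suc by blast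
    show ?thesis unfolding eq using insert k c1 False by (simp add: algebra_simps)
  qed
qed

lemma bessel_zeros_sum:
  assumes "n \<ge> 1"
  shows "(\<Sum>a\<in>bessel_zeros n. a) = -1"
proof -
  let ?S = "bessel_zeros n"
  have fin: "finite ?S" by (rule bessel_zeros_finite)
  have card: "card ?S = n" by (rule card_bessel_zeros)
  then have ne: "?S \<noteq> {}" using assms by auto
  have lc: "lead_coeff (bessel_poly n) = bc n n" by (simp add: degree_bessel coeff_bessel)
  have "coeff (bessel_poly n) (n - 1) = bc n n * coeff (\<Prod>z\<in>?S. [:-z, 1:]) (n - 1)"
    by (subst bessel_decomp) (simp add: lc)
  also have "\<dots> = - bc n n * (\<Sum>a\<in>?S. a)"
    using prod_lin_coeffs[OF fin] ne card by simp
  finally have e1: "bc n (n - 1) = - bc n n * (\<Sum>a\<in>?S. a)" by (simp add: coeff_bessel)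
  have r: "2 * of_nat (Suc (n-1)) * bc n (Suc (n-1)) = of_nat (n + (n-1) + 1) * of_nat (n - (n-1)) * bc n (n-1)"
    using assms by (intro bc_rec) simp
  have sn: "Suc (n-1) = n" "n - (n - 1) = 1" "n + (n-1) + 1 = 2 * n" using assms by auto
  have "of_nat n \<noteq> (0::complex)" using assms by simp
  with r have e2: "bc n n = bc n (n-1)" unfolding sn by simp
  have nz: "bc n n \<noteq> 0" by (simp add: bc_def)
  have "bc n n * (1 + (\<Sum>a\<in>?S. a)) = bc n (n-1) + bc n n * (\<Sum>a\<in>?S. a)"
    using e2 by (simp add: algebra_simps)
  also have "\<dots> = 0" unfolding e1 by simp
  finally have "bc n n * (1 + (\<Sum>a\<in>?S. a)) = 0" .
  then have "1 + (\<Sum>a\<in>?S. a) = 0" using nz by simp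
  moreover have "(\<Sum>a\<in>?S. a) = (1 + (\<Sum>a\<in>?S. a)) - 1" by simp
  ultimately show ?thesis by simp
qed

lemma pderiv_lin_root: "poly (pderiv ([:-r, 1:] * P)) r = poly P (r::complex)"
  by (simp only: pderiv_mult) (simp add: pderiv_pCons)

lemma partial_frac:
  fixes p q :: "complex poly" and t :: complex
  assumes rsf: "rsquarefree p" and dq: "degree q < degree p" and pt: "poly p t \<noteq> 0"
  shows "poly q t / poly p t =
    (\<Sum>r\<in>{z. poly p z = 0}. poly q r / (poly (pderiv p) r * (t - r)))"
proof -
  define R where "R = {z. poly p z = 0}"
  have p0: "p \<noteq> 0" using rsf by (simp add: rsquarefree_def)
  have fin: "finite R" unfolding R_def by (rule poly_roots_finite[OF p0])
  define L where "L = lead_coeff p"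
  have L0: "L \<noteq> 0" using p0 by (simp add: L_def)
  have pd: "p = smult L (\<Prod>s\<in>R. [:-s, 1:])"
    using complex_poly_decompose_rsquarefree[OF rsf] unfolding R_def L_def by simp
  have card: "card R = degree p"
    by (subst pd) (simp add: L0 degree_lin_prod[OF fin])
  have lag: "q = (\<Sum>r\<in>R. smult (poly q r / (\<Prod>s\<in>R-{r}. r - s)) (\<Prod>s\<in>R-{r}. [:-s,1:]))"
    using lagrange[OF fin] dq card by simp
  have tR: "t \<notin> R" using pt unfolding R_def by simp
  have prem: "\<And>r. r \<in> R \<Longrightarrow> p = smult L ([:-r, 1:] * (\<Prod>s\<in>R-{r}. [:-s, 1:]))"
    using pd fin by (metis prod.remove)
  have ptr: "\<And>r. r \<in> R \<Longrightarrow> poly p t = L * (t - r) * (\<Prod>s\<in>R-{r}. t - s)"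
    by (subst prem, assumption) (simp add: poly_prod algebra_simps)
  have pdr: "\<And>r. r \<in> R \<Longrightarrow> poly (pderiv p) r = L * (\<Prod>s\<in>R-{r}. r - s)"
    by (subst prem, assumption) (simp only: pderiv_smult poly_smult pderiv_lin_root poly_prod, simp)
  have "poly q t / poly p t =
     (\<Sum>r\<in>R. poly q r / (\<Prod>s\<in>R-{r}. r - s) * (\<Prod>s\<in>R-{r}. t - s)) / poly p t"
    by (subst lag) (simp add: poly_sum poly_prod)
  also have "\<dots> = (\<Sum>r\<in>R. poly q r / (\<Prod>s\<in>R-{r}. r - s) * (\<Prod>s\<in>R-{r}. t - s) / poly p t)"
    by (rule sum_divide_distrib)
  also have "\<dots> = (\<Sum>r\<in>R. poly q r / (poly (pderiv p) r * (t - r)))"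
  proof (rule sum.cong[OF refl])
    fix r assume r: "r \<in> R"
    have nz: "(\<Prod>s\<in>R-{r}. t - s) \<noteq> 0" "t - r \<noteq> 0" "(\<Prod>s\<in>R-{r}. r - s) \<noteq> 0" using tR fin r by auto
    show "poly q r / (\<Prod>s\<in>R-{r}. r - s) * (\<Prod>s\<in>R-{r}. t - s) / poly p t =
      poly q r / (poly (pderiv p) r * (t - r))"
      unfolding ptr[OF r] pdr[OF r] using nz L0 by (simp add: field_simps)
  qed
  finally show ?thesis unfolding R_def .
qed

lemma poly_bessel: "poly (bessel_poly n) x = (\<Sum>k\<le>n. bc n k * x ^ k)"
  unfolding bessel_poly_def bc_def by (simp add: poly_sum poly_monom)

lemma Q_bessel:
  assumes w: "w \<noteq> 0"
  shows "Q_fun n w = of_nat (fact n) / of_nat (fact (2*n)) * (w ^ n * poly (bessel_poly n) (2 / w))"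
proof -
  have "w ^ n * poly (bessel_poly n) (2 / w) = (\<Sum>k\<le>n. bc n k * 2 ^ k * w ^ (n - k))"
    unfolding poly_bessel sum_distrib_left
  proof (rule sum.cong[OF refl])
    fix k assume "k \<in> {..n}"
    then have "w ^ n = w ^ (n - k) * w ^ k" by (simp add: power_add[symmetric])
    then show "w ^ n * (bc n k * (2 / w) ^ k) = bc n k * 2 ^ k * w ^ (n - k)"
      using w by (simp add: power_divide field_simps)
  qed
  also have "\<dots> = (\<Sum>k\<le>n. of_nat (fact (2*n - k)) / of_nat (fact (n - k)) * w ^ k / of_nat (fact k))"
  proof -
    have "(\<Sum>k\<le>n. of_nat (fact (2*n - k)) / of_nat (fact (n - k)) * w ^ k / of_nat (fact k) :: complex)
      = (\<Sum>k\<in>{0..n}. of_nat (fact (2*n - (n + 0 - k))) / of_nat (fact (n - (n + 0 - k))) * w ^ (n + 0 - k) / of_nat (fact (n + 0 - k)))"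
      unfolding atMost_atLeast0 by (rule sum.atLeastAtMost_rev)
    also have "\<dots> = (\<Sum>k\<le>n. bc n k * 2 ^ k * w ^ (n - k))"
      unfolding atMost_atLeast0
    proof (rule sum.cong[OF refl])
      fix k assume "k \<in> {0..n}"
      then have e: "2*n - (n + 0 - k) = n + k" "n - (n + 0 - k) = k" "n + 0 - k = n - k" "2*n - (n - k) = n + k" "n - (n - k) = k" "n * 2 - (n - k) = n + k" by auto
      show "of_nat (fact (2*n - (n + 0 - k))) / of_nat (fact (n - (n + 0 - k))) * w ^ (n + 0 - k) / of_nat (fact (n + 0 - k)) = bc n k * 2 ^ k * w ^ (n - k)"
        unfolding e bc_def by (simp add: e field_simps)
    qed
    finally show ?thesis by simp
  qed
  finally show ?thesis unfolding Q_fun_def by simp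
qed

lemma helper1: "(c::complex) \<noteq> 0 \<Longrightarrow> x * (-1/c) / ((2/c) * y) = - x / (2*y)"
  by (cases "y = 0") (simp_all add: field_simps)

lemma helper2: "(c::complex) \<noteq> 0 \<Longrightarrow> x * (-1/c) / ((-2/c) * y) = x / (2*y)"
  by (cases "y = 0") (simp_all add: field_simps)

lemma helper3: "(z::complex) \<noteq> 0 \<Longrightarrow> A \<noteq> 0 \<Longrightarrow> B \<noteq> 0 \<Longrightarrow>
  (1+a/2)/B - (1-a/2)/A = -(2/z)*(-(2-a)/(2*(-2*A/z)) + (2+a)/(2*(-2*B/z)))"
  by (simp add: field_simps)

lemma helper4: "(c::complex) \<noteq> 0 \<Longrightarrow> Z \<noteq> 0 \<Longrightarrow> W \<noteq> 0 \<Longrightarrow> P \<noteq> 0 \<Longrightarrow> E \<noteq> 0 \<Longrightarrow> s^2 = 1 \<Longrightarrow>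
  s * c^2 * (Z / (W * E)) * (1 / (c^2 * s * (Z / W) * P)) = 1 / (E * P)"
proof -
  assume a: "c \<noteq> 0" "Z \<noteq> 0" "W \<noteq> 0" "P \<noteq> 0" "E \<noteq> 0" "s^2 = 1"
  then have "s \<noteq> 0" by auto
  then have "s * c^2 * (Z / (W * E)) * (1 / (c^2 * s * (Z / W) * P)) = (s * s) / (s * s) * (1 / (E * P))"
    using a by (simp add: field_simps power2_eq_square)
  then show ?thesis using \<open>s \<noteq> 0\<close> by simp
qed

lemma helper5a: "(z::complex) \<noteq> 0 \<Longrightarrow> d \<noteq> 0 \<Longrightarrow> P \<noteq> 0 \<Longrightarrow>
   1 / (d^2 * P) = 1 / d^2 - (2 / z) * ((2 / z) * ((P - 1) * z^2 / (4 * d^2)) / P)"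
  by (simp add: field_simps power2_eq_square)

lemma helper5: "(z::complex) \<noteq> 0 \<Longrightarrow> z - 1 \<noteq> 0 \<Longrightarrow> P \<noteq> 0 \<Longrightarrow> t = 2 - 2 / z \<Longrightarrow> t^2 * H = P - 1 \<Longrightarrow>
   1 / ((z - 1)^2 * P) = 1 / (z - 1)^2 - (2 / z) * ((2 - t) * H / P)"
proof -
  assume a: "z \<noteq> 0" "z - 1 \<noteq> 0" "P \<noteq> 0" "t = 2 - 2 / z" "t^2 * H = P - 1"
  have t2: "t^2 = 4 * (z-1)^2 / z^2" unfolding a(4) using a(1) by (simp add: field_simps power2_eq_square)
  have "4 * (z-1)^2 / z^2 \<noteq> 0" using a(1,2) by simp
  then have H: "H = (P - 1) * z^2 / (4 * (z-1)^2)" using a(5) unfolding t2 by (simp add: field_simps)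
  have tt: "2 - t = 2 / z" using a by simp
  show ?thesis unfolding H tt by (rule helper5a[OF a(1,2,3)])
qed

theorem mainTheorem7:
  fixes n :: nat and z :: complex
  assumes "n \<ge> 1"
    and "z \<noteq> 1"
    and "\<forall>\<alpha>\<in>bessel_zeros n. 1 - (1 - \<alpha>/2) * z \<noteq> 0 \<and> 1 - (1 + \<alpha>/2) * z \<noteq> 0"
    and "Q_fun n (z / (z - 1)) * Q_fun n (- (z / (z - 1))) \<noteq> 0"
  shows "R_fun n z =
    (-1) ^ n * (of_nat (fact n))^2 / (of_nat (fact (2*n)))^2
    * (z ^ (2*n) / (z - 1) ^ (2*n + 2))
    * (1 / (Q_fun n (z / (z - 1)) * Q_fun n (- (z / (z - 1)))))"
proof -
  note n1 = assms(1) and z1 = assms(2) and hz = assms(3)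
  define S where "S = bessel_zeros n"
  define y where "y = bessel_poly n"
  define v where "v = pcompose y [:0,-1:]"
  define p where "p = y * v"
  have finS: "finite S" unfolding S_def by (rule bessel_zeros_finite)
  have S_iff: "\<And>a. a \<in> S \<longleftrightarrow> poly y a = 0" unfolding S_def y_def bessel_zeros_def by simp
  have pv: "\<And>x. poly v x = poly y (-x)" "\<And>x. poly (pderiv v) x = - poly (pderiv y) (-x)"
    unfolding v_def pderiv_refl by (simp_all add: poly_pcompose)
  have pp: "\<And>x. poly p x = poly y x * poly y (-x)" unfolding p_def by (simp add: pv)
  have pdp: "\<And>x. poly (pderiv p) x = poly (pderiv y) x * poly y (-x) - poly y x * poly (pderiv y) (-x)"
    unfolding p_def pderiv_mult by (simp add: pv algebra_simps)
  have root: "\<And>a. a \<in> S \<Longrightarrow> a^2 * poly (pderiv y) a * poly y (-a) = 2"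
    unfolding S_iff y_def by (rule bessel_root)
  have rt: "\<And>a. a \<in> S \<Longrightarrow> a \<noteq> 0 \<and> poly y (-a) \<noteq> 0 \<and> poly (pderiv y) a * poly y (-a) = 2 / a^2"
  proof -
    fix a assume a: "a \<in> S"
    have r: "a^2 * (poly (pderiv y) a * poly y (-a)) = 2" using root[OF a] by (simp add: algebra_simps)
    then have "a \<noteq> 0" "poly y (-a) \<noteq> 0" by auto
    then show "a \<noteq> 0 \<and> poly y (-a) \<noteq> 0 \<and> poly (pderiv y) a * poly y (-a) = 2 / a^2"
      using r by (simp add: field_simps)
  qed
  have y0: "poly y 0 = 1" unfolding y_def by (simp add: poly_0_coeff_0 coeff_bessel bc0)
  have sumS: "(\<Sum>a\<in>S. a) = -1" unfolding S_def by (rule bessel_zeros_sum[OF n1])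
  show ?thesis
  proof (cases "z = 0")
    case True
    have "R_fun n z = 1 + ((\<Sum>a\<in>S. (1 + a/2)) - (\<Sum>a\<in>S. (1 - a/2)))"
      unfolding R_fun_def S_def[symmetric] True by simp
    also have "\<dots> = 1 + (\<Sum>a\<in>S. a)" by (simp add: sum_subtractf[symmetric])
    also have "\<dots> = 0" using sumS by simp
    finally show ?thesis using True n1 by simp
  next
    case False
    note z0 = False
    define t where "t = 2 - 2 / z"
    have t0: "t \<noteq> 0" using z0 z1 unfolding t_def by (auto simp: field_simps)
    have tS: "t \<notin> S" "-t \<notin> S"
    proof -
      show "t \<notin> S"
      proof
        assume "t \<in> S"
        then have "1 - (1 - t/2) * z \<noteq> 0" using hz unfolding S_def by blast
        then show False using z0 unfolding t_def by (simp add: field_simps)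
      qed
      show "-t \<notin> S"
      proof
        assume "-t \<in> S"
        then have "1 - (1 + (-t)/2) * z \<noteq> 0" using hz unfolding S_def by blast
        then show False using z0 unfolding t_def by (simp add: field_simps)
      qed
    qed
    have Pt: "poly p t \<noteq> 0" using tS unfolding pp S_iff by simp
    have Rp: "{x. poly p x = 0} = S \<union> uminus ` S"
    proof (rule set_eqI)
      fix x
      have "x \<in> uminus ` S \<longleftrightarrow> -x \<in> S" by (force simp: image_iff)
      then show "x \<in> {x. poly p x = 0} \<longleftrightarrow> x \<in> S \<union> uminus ` S"
        using S_iff[of x] S_iff[of "-x"] unfolding pp by auto
    qed
    have disj: "S \<inter> uminus ` S = {}"
    proof (rule ccontr)
      assume "S \<inter> uminus ` S \<noteq> {}"
      then obtain a where "a \<in> S" "-a \<in> S" by auto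
      then show False using rt S_iff by blast
    qed
    have rsf: "rsquarefree p" unfolding rsquarefree_roots
    proof (intro allI notI)
      fix a assume a: "poly p a = 0 \<and> poly (pderiv p) a = 0"
      show False
      proof (cases "poly y a = 0")
        case True
        then have "a \<in> S" using S_iff by simp
        then show False using rt[of a] a True unfolding pdp by auto
      next
        case False
        then have "-a \<in> S" using a S_iff unfolding pp by simp
        then have r2: "(-a)^2 * poly (pderiv y) (-a) * poly y a = 2" using root by fastforce
        have "poly y (-a) = 0" using \<open>-a \<in> S\<close> S_iff by simp
        then have "poly y a * poly (pderiv y) (-a) = 0" using a unfolding pdp by simp
        then have "(-a)^2 * poly (pderiv y) (-a) * poly y a = 0" by (auto simp: algebra_simps)
        then show False using r2 by (auto simp del: mult_eq_0_iff)
      qed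
    qed
    have y_nz: "y \<noteq> 0" unfolding y_def by (rule bessel_nz)
    have v_nz: "v \<noteq> 0" using pv(1)[of 0] y0 by auto
    have deg_y: "degree y = n" unfolding y_def by (rule degree_bessel)
    have deg_v: "degree v = n" unfolding v_def by (simp add: degree_pcompose deg_y)
    have deg_p: "degree p = 2 * n" unfolding p_def using y_nz v_nz by (simp add: degree_mult_eq deg_y deg_v)
    have c0: "coeff (p - 1) 0 = 0" using pp[of 0] y0 by (simp add: poly_0_coeff_0[symmetric])
    have c1: "coeff (p - 1) 1 = 0"
    proof -
      have "coeff (p - 1) 1 = coeff (pderiv p) 0" by (simp add: coeff_pderiv)
      also have "\<dots> = 0" using pdp[of 0] by (simp add: poly_0_coeff_0[symmetric])
      finally show ?thesis .
    qed
    obtain a1 r1 where e1: "p - 1 = pCons a1 r1" using pCons_cases by blast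
    obtain a2 h where e2: "r1 = pCons a2 h" using pCons_cases by blast
    have hdef: "p - 1 = pCons 0 (pCons 0 h)" using c0 c1 e1 e2 by simp
    have ph: "\<And>x. poly p x - 1 = x^2 * poly h x"
    proof -
      fix x
      have "poly (p - 1) x = x^2 * poly h x" unfolding hdef by (simp add: power2_eq_square)
      then show "poly p x - 1 = x^2 * poly h x" by simp
    qed
    define q where "q = [:2, -1:] * h"
    have pq: "\<And>x. poly q x = (2 - x) * poly h x" unfolding q_def by (simp add: algebra_simps)
    have dq: "degree q < degree p"
    proof (cases "h = 0")
      case True then show ?thesis using deg_p n1 by (simp add: q_def)
    next
      case False
      have "degree (p - 1) \<le> degree p" by (rule degree_diff_le) auto
      then have "degree h + 2 \<le> 2 * n" using False unfolding hdef deg_p by simp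
      moreover have "degree q \<le> 1 + degree h" unfolding q_def
        using degree_mult_le[of "[:2, -1:]" h] by simp
      ultimately show ?thesis using deg_p by simp
    qed
    have PF: "poly q t / poly p t = (\<Sum>r\<in>S \<union> uminus ` S. poly q r / (poly (pderiv p) r * (t - r)))"
      using partial_frac[OF rsf dq Pt] unfolding Rp .
    define T where "T = (\<lambda>a. - (2 - a) / (2 * (t - a)) + (2 + a) / (2 * (t + a)))"
    have trm: "\<And>a. a \<in> S \<Longrightarrow> poly q a / (poly (pderiv p) a * (t - a)) +
        poly q (-a) / (poly (pderiv p) (-a) * (t - (-a))) = T a"
    proof -
      fix a assume a: "a \<in> S"
      have ya: "poly y a = 0" using a S_iff by simp
      obtain a0: "a \<noteq> 0" and yma: "poly y (-a) \<noteq> 0" and D: "poly (pderiv y) a * poly y (-a) = 2 / a^2"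
        using rt[OF a] by blast
      have ha: "poly h a = - 1 / a^2" using ph[of a] a0 unfolding pp ya by (simp add: field_simps)
      have hma: "poly h (-a) = - 1 / a^2" using ph[of "-a"] a0 ya unfolding pp by (simp add: field_simps)
      have d1: "poly (pderiv p) a = 2 / a^2" using D unfolding pdp ya by simp
      have d2: "poly (pderiv p) (-a) = - 2 / a^2" using D ya unfolding pdp by (simp add: algebra_simps)
      have ta: "t - a \<noteq> 0" "t + a \<noteq> 0" using tS a by (auto simp: add_eq_0_iff)
      show "poly q a / (poly (pderiv p) a * (t - a)) +
        poly q (-a) / (poly (pderiv p) (-a) * (t - (-a))) = T a"
      proof -
        have e1: "poly q a / (poly (pderiv p) a * (t - a)) = - (2 - a) / (2 * (t - a))"
          unfolding pq ha d1 using a0 helper1[of "a^2" "2 - a" "t - a"] by simp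
        have e2: "poly q (-a) / (poly (pderiv p) (-a) * (t - (-a))) = (2 + a) / (2 * (t + a))"
          unfolding pq hma d2 using a0 helper2[of "a^2" "2 - - a" "t - - a"] by (simp add: algebra_simps)
        show ?thesis unfolding e1 e2 T_def ..
      qed
    qed
    have inj: "inj_on uminus S" by (simp add: inj_on_def)
    have "poly q t / poly p t = (\<Sum>a\<in>S. poly q a / (poly (pderiv p) a * (t - a))) +
        (\<Sum>a\<in>uminus ` S. poly q a / (poly (pderiv p) a * (t - a)))"
      unfolding PF using finS disj by (intro sum.union_disjoint) auto
    also have "(\<Sum>a\<in>uminus ` S. poly q a / (poly (pderiv p) a * (t - a))) =
        (\<Sum>a\<in>S. poly q (-a) / (poly (pderiv p) (-a) * (t - (-a))))"
      by (subst sum.reindex[OF inj]) simp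
    also have "(\<Sum>a\<in>S. poly q a / (poly (pderiv p) a * (t - a))) +
        (\<Sum>a\<in>S. poly q (-a) / (poly (pderiv p) (-a) * (t - (-a)))) = (\<Sum>a\<in>S. T a)"
      unfolding sum.distrib[symmetric] using trm by (rule sum.cong[OF refl])
    finally have qp: "poly q t / poly p t = (\<Sum>a\<in>S. T a)" .
    have term2: "\<And>a. a \<in> S \<Longrightarrow> (1 + a/2) / (1 - (1 + a/2) * z) - (1 - a/2) / (1 - (1 - a/2) * z)
        = - (2 / z) * T a"
    proof -
      fix a assume a: "a \<in> S"
      have h1: "1 - (1 - a/2) * z \<noteq> 0" "1 - (1 + a/2) * z \<noteq> 0" using hz a unfolding S_def by auto
      have ta: "t - a \<noteq> 0" "t + a \<noteq> 0" using tS a by (auto simp: add_eq_0_iff)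
      have h1': "2 - 2 * z + a * z \<noteq> 0" "2 - 2 * z - a * z \<noteq> 0" using h1 by (auto simp: field_simps)
      have ta': "2 * z - 2 - a * z \<noteq> 0" "2 * z - 2 + a * z \<noteq> 0" using ta z0 unfolding t_def
        by (auto simp: field_simps)
      show "(1 + a/2) / (1 - (1 + a/2) * z) - (1 - a/2) / (1 - (1 - a/2) * z) = - (2 / z) * T a"
      proof -
        have tA: "t - a = -2 * (1 - (1 - a/2) * z) / z" using z0 unfolding t_def by (simp add: field_simps)
        have tB: "t + a = -2 * (1 - (1 + a/2) * z) / z" using z0 unfolding t_def by (simp add: field_simps)
        show ?thesis unfolding T_def tA tB by (rule helper3[OF z0 h1])
      qed
    qed
    have LHS: "R_fun n z = 1 / (z - 1)^2 - (2 / z) * (poly q t / poly p t)"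
    proof -
      have "R_fun n z = 1 / (z - 1)^2 + ((\<Sum>a\<in>S. (1 + a/2) / (1 - (1 + a/2) * z)) -
          (\<Sum>a\<in>S. (1 - a/2) / (1 - (1 - a/2) * z)))"
        unfolding R_fun_def S_def by simp
      also have "\<dots> = 1 / (z - 1)^2 + (\<Sum>a\<in>S. - (2 / z) * T a)"
        unfolding sum_subtractf[symmetric] using term2 by (simp cong: sum.cong)
      also have "\<dots> = 1 / (z - 1)^2 - (2 / z) * (poly q t / poly p t)"
        unfolding qp sum_distrib_left[symmetric] by simp
      finally show ?thesis .
    qed
    define w where "w = z / (z - 1)"
    have zm1: "z - 1 \<noteq> 0" using z1 by simp
    have w0: "w \<noteq> 0" using z0 zm1 unfolding w_def by simp
    have w0': "- w \<noteq> 0" using w0 by simp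
    have wt: "2 / w = t" "2 / (- w) = - t" unfolding w_def t_def using z0 zm1 by (simp_all add: field_simps)
    define K :: complex where "K = of_nat (fact n) / of_nat (fact (2*n))"
    have K0: "K \<noteq> 0" unfolding K_def by simp
    have QQ: "Q_fun n w * Q_fun n (- w) = K^2 * (-1)^n * (z^(2*n) / (z-1)^(2*n)) * poly p t"
    proof -
      have "Q_fun n w * Q_fun n (- w) = K * (w ^ n * poly y t) * (K * ((- w) ^ n * poly y (- t)))"
        using w0 wt unfolding Q_bessel[OF w0] Q_bessel[of "-w" n, OF w0'] K_def y_def by simp
      also have "\<dots> = K^2 * (-1)^n * (w^n)^2 * poly p t"
        unfolding pp power_minus[of w] power2_eq_square by (simp only: mult_ac)
      also have "(w^n)^2 = z^(2*n) / (z-1)^(2*n)" unfolding w_def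
        by (simp add: power_divide power_mult[symmetric] mult.commute)
      finally show ?thesis .
    qed
    have RHS: "(-1) ^ n * (of_nat (fact n))^2 / (of_nat (fact (2*n)))^2
      * (z ^ (2*n) / (z - 1) ^ (2*n + 2))
      * (1 / (Q_fun n (z / (z - 1)) * Q_fun n (- (z / (z - 1))))) = 1 / ((z - 1)^2 * poly p t)"
      unfolding w_def[symmetric] QQ
    proof -
      have e: "(-1) ^ n * (of_nat (fact n))^2 / (of_nat (fact (2*n)))^2 = (-1)^n * K^2"
        unfolding K_def by (simp add: power_divide)
      have e2: "(z - 1) ^ (2*n + 2) = (z-1)^(2*n) * (z-1)^2" by (simp only: power_add)
      have s2: "((-1::complex)^n)^2 = 1" by (simp add: power_mult[symmetric] mult.commute)
      show "(-1) ^ n * (of_nat (fact n))^2 / (of_nat (fact (2*n)))^2 * (z ^ (2*n) / (z - 1) ^ (2*n + 2)) *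
          (1 / (K^2 * (-1)^n * (z^(2*n) / (z-1)^(2*n)) * poly p t)) = 1 / ((z - 1)^2 * poly p t)"
        unfolding e e2 by (rule helper4) (use K0 z0 zm1 Pt s2 in auto)
    qed
    have fin: "1 / ((z - 1)^2 * poly p t) = 1 / (z - 1)^2 - (2 / z) * (poly q t / poly p t)"
      unfolding pq by (rule helper5[OF z0 zm1 Pt t_def]) (use ph[of t] in \<open>simp add: algebra_simps\<close>)
    show ?thesis unfolding LHS RHS fin ..
  qed
qed

end
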